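(* Let $B$ be a finite set with $|B|\ge 2$ and let $f$ be an $\mathsf{A}$-shop on $B$. Then $\langle f\rangle$ contains an $\mathsf{A}$-shop $g$ for which there are an element $b\in B$ and sets $B',B''\subseteq B$ with $B'$ non-empty, such that $\{b\},B',B''$ are pairwise disjoint with union $B$, and (1) $g(b)=B$; (2) $g(x)=\{x\}$ for all $x\in B'$; (3) for every $x\in B''$ there exists $y\in B'$ with $g(x)=\{y\}$.
   Context: A shop on $B$ is a map $f:B\to\mathcal{P}(B)\setminus\{\emptyset\}$ such that every $y\in B$ lies in $f(x)$ for some $x\in B$. An $\mathsf{A}$-shop is a shop $f$ such that $f(b)=B$ for some $b\in B$. The identity shop is $x\mapsto\{x\}$; the composition of shops is $(g\circ f)(x)=\{z:\exists y\ (y\in f(x)\wedge z\in g(y))\}$; a shop $f$ is a sub-shop of $g$ if $f(x)\subseteq g(x)$ for all $x$. A down-she-monoid (DSM) on $B$ is a set of shops on $B$ containing the identity, closed under composition and under taking sub-shops (that are shops). $\langle f\rangle$ denotes the smallest DSM containing $f$. *)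

theory Defs
  imports Main
begin

text \<open>Shops on a carrier set B are represented as functions 'a => 'a set that are
  extensional: they take the value {} outside B.\<close>

definition shop :: "'a set \<Rightarrow> ('a \<Rightarrow> 'a set) \<Rightarrow> bool" where
  "shop B f \<longleftrightarrow> (\<forall>x\<in>B. f x \<subseteq> B \<and> f x \<noteq> {}) \<and> (\<forall>x. x \<notin> B \<longrightarrow> f x = {})
      \<and> (\<forall>y\<in>B. \<exists>x\<in>B. y \<in> f x)"

definition A_shop :: "'a set \<Rightarrow> ('a \<Rightarrow> 'a set) \<Rightarrow> bool" where
  "A_shop B f \<longleftrightarrow> shop B f \<and> (\<exists>b\<in>B. f b = B)"

definition id_shop :: "'a set \<Rightarrow> 'a \<Rightarrow> 'a set" where
  "id_shop B = (\<lambda>x. if x \<in> B then {x} else {})"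

definition shop_comp :: "('a \<Rightarrow> 'a set) \<Rightarrow> ('a \<Rightarrow> 'a set) \<Rightarrow> 'a \<Rightarrow> 'a set" where
  "shop_comp g f = (\<lambda>x. {z. \<exists>y. y \<in> f x \<and> z \<in> g y})"

definition sub_shop :: "('a \<Rightarrow> 'a set) \<Rightarrow> ('a \<Rightarrow> 'a set) \<Rightarrow> bool" where
  "sub_shop f g \<longleftrightarrow> (\<forall>x. f x \<subseteq> g x)"

definition DSM :: "'a set \<Rightarrow> ('a \<Rightarrow> 'a set) set \<Rightarrow> bool" where
  "DSM B M \<longleftrightarrow> (\<forall>f\<in>M. shop B f) \<and> id_shop B \<in> M
     \<and> (\<forall>f\<in>M. \<forall>g\<in>M. shop_comp g f \<in> M)
     \<and> (\<forall>g\<in>M. \<forall>f. shop B f \<and> sub_shop f g \<longrightarrow> f \<in> M)"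

definition gen_DSM :: "'a set \<Rightarrow> ('a \<Rightarrow> 'a set) \<Rightarrow> ('a \<Rightarrow> 'a set) set" where
  "gen_DSM B f = \<Inter>{M. DSM B M \<and> f \<in> M}"

end

theory Submission
  imports Defs
begin

lemma comp_assoc_shop: "shop_comp a (shop_comp b c) = shop_comp (shop_comp a b) c"
  unfolding shop_comp_def by (rule ext) auto

lemma comp_id_left: "shop B g \<Longrightarrow> shop_comp (id_shop B) g = g"
  unfolding shop_comp_def id_shop_def shop_def by (rule ext) auto

lemma comp_shop: "shop B a \<Longrightarrow> shop B c \<Longrightarrow> shop_comp a c x \<subseteq> B"
  unfolding shop_comp_def shop_def by auto

fun hp :: "'a set \<Rightarrow> ('a \<Rightarrow> 'a set) \<Rightarrow> nat \<Rightarrow> 'a \<Rightarrow> 'a set" where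
  "hp B h 0 = id_shop B"
| "hp B h (Suc n) = shop_comp h (hp B h n)"

lemma hp_in: assumes "DSM B M" "h \<in> M" shows "hp B h n \<in> M"
proof (induction n)
  case 0 then show ?case using assms(1) unfolding DSM_def by simp
next
  case (Suc n)
  have "\<forall>f\<in>M. \<forall>g\<in>M. shop_comp g f \<in> M" using assms(1) unfolding DSM_def by blast
  then show ?case using Suc assms(2) by simp
qed

lemma hp_add: assumes "DSM B M" "h \<in> M"
  shows "hp B h (m + n) = shop_comp (hp B h m) (hp B h n)"
proof (induction m)
  case 0
  have "shop B (hp B h n)" using hp_in[OF assms] assms(1) unfolding DSM_def by blast
  then show ?case by (simp add: comp_id_left)
next
  case (Suc m)
  then show ?case by (simp add: comp_assoc_shop)
qed

lemma main:
  fixes B :: "'a set" and f :: "'a \<Rightarrow> 'a set"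
  assumes fin: "finite B" and card: "card B \<ge> 2" and bB: "b \<in> B" and fb: "f b = B"
    and sf: "shop B f" and DM: "DSM B M" and fM: "f \<in> M"
  shows "\<exists>g \<in> M. A_shop B g \<and>
           (\<exists>b B' B''. b \<in> B \<and> B' \<subseteq> B \<and> B'' \<subseteq> B \<and> B' \<noteq> {} \<and>
              b \<notin> B' \<and> b \<notin> B'' \<and> B' \<inter> B'' = {} \<and> {b} \<union> B' \<union> B'' = B \<and>
              g b = B \<and>
              (\<forall>x\<in>B'. g x = {x}) \<and>
              (\<forall>x\<in>B''. \<exists>y\<in>B'. g x = {y}))"
proof -
  have shopM: "\<And>g. g \<in> M \<Longrightarrow> shop B g" using DM unfolding DSM_def by blast
  have subM: "\<And>g k. g \<in> M \<Longrightarrow> shop B k \<Longrightarrow> sub_shop k g \<Longrightarrow> k \<in> M"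
    using DM unfolding DSM_def by blast
  define h where "h = (\<lambda>x. if x = b then B else if x \<in> B then {SOME y. y \<in> f x} else {})"
  have fne: "\<And>x. x \<in> B \<Longrightarrow> f x \<noteq> {}" "\<And>x. x \<in> B \<Longrightarrow> f x \<subseteq> B"
    "\<And>x. x \<notin> B \<Longrightarrow> f x = {}"
    using sf unfolding shop_def by auto
  have somef: "\<And>x. x \<in> B \<Longrightarrow> (SOME y. y \<in> f x) \<in> f x"
    using fne(1) by (meson ex_in_conv someI_ex)
  have sh: "shop B h"
    unfolding shop_def h_def using bB somef fne(2) by auto
  have "sub_shop h f" unfolding sub_shop_def h_def using fb somef fne(3) by auto
  hence hM: "h \<in> M" using subM[OF fM sh] by blast
  have hb: "h b = B" unfolding h_def by simp
  have hsing: "\<And>x. x \<in> B \<Longrightarrow> x \<noteq> b \<Longrightarrow> \<exists>y. h x = {y}" unfolding h_def by auto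
  have hcov: "\<And>y. y \<in> B \<Longrightarrow> \<exists>x\<in>B. y \<in> h x" using sh unfolding shop_def by blast
  have hsub: "\<And>x. h x \<subseteq> B" using sh unfolding shop_def by blast
  let ?S = "{g. \<forall>x. (x \<in> B \<longrightarrow> g x \<in> Pow B) \<and> (x \<notin> B \<longrightarrow> g x = {})}"
  have "finite (Pow B)" using fin by simp
  then have finS: "finite ?S" by (rule finite_set_of_finite_funs[OF fin])
  have "range (hp B h) \<subseteq> ?S"
  proof
    fix g assume "g \<in> range (hp B h)"
    then have "shop B g" using hp_in[OF DM hM] shopM by blast
    then show "g \<in> ?S" unfolding shop_def by blast
  qed
  hence fr: "finite (range (hp B h))" using finS by (rule finite_subset)
  have "\<not> inj (hp B h)"
  proof
    assume "inj (hp B h)"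
    then have "finite (UNIV :: nat set)" using fr finite_imageD by blast
    then show False by simp
  qed
  then obtain i j where ij: "i \<noteq> j" "hp B h i = hp B h j" unfolding inj_def by blast
  obtain i0 p where ip: "p > 0" "hp B h i0 = hp B h (i0 + p)"
  proof (cases "i < j")
    case True then show ?thesis using that[of "j - i" i] ij by simp
  next
    case False then show ?thesis using that[of "i - j" j] ij by simp
  qed
  have per: "hp B h (n + k * p) = hp B h n" if "n \<ge> i0" for n k
  proof (induction k)
    case 0 then show ?case by simp
  next
    case (Suc k)
    have "hp B h (n + Suc k * p) = hp B h ((n - i0 + k*p) + (i0 + p))"
      using that by (simp add: algebra_simps)
    also have "\<dots> = shop_comp (hp B h (n - i0 + k*p)) (hp B h (i0 + p))"
      by (rule hp_add[OF DM hM])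
    also have "\<dots> = shop_comp (hp B h (n - i0 + k*p)) (hp B h i0)" using ip by simp
    also have "\<dots> = hp B h (n - i0 + k*p + i0)" by (rule hp_add[OF DM hM, symmetric])
    also have "\<dots> = hp B h (n + k*p)" using that by (simp add: algebra_simps)
    finally show ?case using Suc by simp
  qed
  define N where "N = (i0 + 1) * p"
  have N1: "N \<ge> i0 + 1"
  proof -
    have "(i0 + 1) * 1 \<le> (i0 + 1) * p" using ip(1) by (intro mult_le_mono2) simp
    then show ?thesis unfolding N_def by simp
  qed
  define e where "e = hp B h N"
  have eM: "e \<in> M" unfolding e_def by (rule hp_in[OF DM hM])
  have she: "shop B e" using shopM[OF eM] .
  have idem: "shop_comp e e = e"
  proof -
    have "shop_comp e e = hp B h (N + N)" unfolding e_def by (rule hp_add[OF DM hM, symmetric])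
    also have "\<dots> = hp B h (N + (i0+1) * p)" unfolding N_def by simp
    also have "\<dots> = e" unfolding e_def by (rule per) (use N1 in simp)
    finally show ?thesis .
  qed
  have bin: "b \<in> hp B h n b" for n
  proof (induction n)
    case 0 then show ?case using bB by (simp add: id_shop_def)
  next
    case (Suc n) then show ?case using hb bB by (auto simp: shop_comp_def)
  qed
  have hpSb: "hp B h (Suc n) b = B" for n
  proof -
    have "hp B h (Suc n) b \<subseteq> B" using comp_shop[OF sh shopM[OF hp_in[OF DM hM]]] by simp
    moreover have "B \<subseteq> hp B h (Suc n) b" using bin[of n] hb by (auto simp: shop_comp_def)
    ultimately show ?thesis by blast
  qed
  have "N = Suc (N - 1)" using N1 by simp
  then have eb: "e b = B" unfolding e_def using hpSb by metis
  have shape: "\<And>x. x \<in> B \<Longrightarrow> hp B h n x = B \<or> (\<exists>y. hp B h n x = {y})" for n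
  proof (induction n)
    case 0 then show ?case by (simp add: id_shop_def)
  next
    case (Suc n)
    from Suc.IH[OF Suc.prems] show ?case
    proof
      assume a: "hp B h n x = B"
      have "hp B h (Suc n) x = {z. \<exists>y. y \<in> B \<and> z \<in> h y}" using a by (simp add: shop_comp_def)
      also have "\<dots> = B" using hcov hsub by blast
      finally have "hp B h (Suc n) x = B" .
      then show ?case by blast
    next
      assume "\<exists>y. hp B h n x = {y}"
      then obtain y where y: "hp B h n x = {y}" by blast
      have hy: "hp B h (Suc n) x = h y" using y by (simp add: shop_comp_def)
      have "hp B h n x \<subseteq> B" using shopM[OF hp_in[OF DM hM, of n]] Suc.prems
        unfolding shop_def by blast
      then have yB: "y \<in> B" using y by simp
      show ?case
      proof (cases "y = b")
        case True then show ?thesis using hy hb by simp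
      next
        case False then obtain z where "h y = {z}" using hsing[OF yB] by blast
        then show ?thesis using hy by simp
      qed
    qed
  qed
  have eshape: "\<And>x. x \<in> B \<Longrightarrow> e x = B \<or> (\<exists>y. e x = {y})" unfolding e_def using shape by blast
  have Bnb: "\<exists>c\<in>B. c \<noteq> b"
  proof (rule ccontr)
    assume "\<not> ?thesis" then have "B \<subseteq> {b}" by blast
    then have "card B \<le> card {b}" by (intro card_mono) simp_all
    then have "card B \<le> 1" by simp
    then show False using card by simp
  qed
  have esing: "\<And>x y. e x = {y} \<Longrightarrow> y \<noteq> b \<and> e y = {y} \<and> y \<in> B"
  proof -
    fix x y assume a: "e x = {y}"
    have "shop_comp e e x = e y" using a by (auto simp: shop_comp_def)
    hence ey: "e y = {y}" using idem a by simp
    have "y \<noteq> b" using ey eb Bnb by auto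
    moreover have "y \<in> B" using ey she unfolding shop_def by blast
    ultimately show "y \<noteq> b \<and> e y = {y} \<and> y \<in> B" using ey by blast
  qed
  define B1 where "B1 = {y\<in>B. y \<noteq> b \<and> e y = {y}}"
  obtain c where c: "c \<in> B" "c \<noteq> b" "c \<in> B1 \<or> e c = B"
  proof (cases "B1 = {}")
    case True
    obtain c where "c \<in> B" "c \<noteq> b" using Bnb by blast
    moreover have "e c = B"
    proof -
      from eshape[OF \<open>c \<in> B\<close>] show ?thesis
      proof
        assume "\<exists>y. e c = {y}"
        then obtain y where "e c = {y}" by blast
        then have "y \<in> B1" using esing unfolding B1_def by blast
        then show ?thesis using True by blast
      qed
    qed
    ultimately show ?thesis using that by blast
  next
    case False
    then obtain c where "c \<in> B1" by blast
    then show ?thesis using that unfolding B1_def by blast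
  qed
  define C where "C = insert c B1"
  define g where "g = (\<lambda>x. if x \<notin> B then {} else if x = b then B else if x \<in> C then {x}
                          else if e x = B then {c} else e x)"
  have eout: "\<And>x. x \<notin> B \<Longrightarrow> e x = {}" using she unfolding shop_def by blast
  have esub: "\<And>x. e x \<subseteq> B" "\<And>x. x \<in> B \<Longrightarrow> e x \<noteq> {}" using she unfolding shop_def by blast+
  have CB: "C \<subseteq> B" "b \<notin> C" unfolding C_def B1_def using c by auto
  have Cne: "C \<noteq> {}" unfolding C_def by blast
  have Ce: "\<And>x. x \<in> C \<Longrightarrow> x \<in> e x" unfolding C_def B1_def using c B1_def by auto
  have g1: "\<And>x. x \<notin> B \<Longrightarrow> g x = {}" unfolding g_def by simp
  have g3: "\<And>x. x \<in> C \<Longrightarrow> g x = {x}" unfolding g_def using CB by auto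
  have g4: "\<And>x. x \<in> B \<Longrightarrow> x \<noteq> b \<Longrightarrow> x \<notin> C \<Longrightarrow> e x = B \<Longrightarrow> g x = {c}"
    unfolding g_def by simp
  have g5: "\<And>x. x \<in> B \<Longrightarrow> x \<noteq> b \<Longrightarrow> x \<notin> C \<Longrightarrow> e x \<noteq> B \<Longrightarrow> g x = e x"
    unfolding g_def by simp
  have gb: "g b = B" unfolding g_def using bB by simp
  have gval: "g x \<subseteq> B \<and> g x \<noteq> {} \<and> g x \<subseteq> e x" if x: "x \<in> B" for x
  proof (cases "x = b")
    case True then show ?thesis using gb eb bB by auto
  next
    case nb: False
    show ?thesis
    proof (cases "x \<in> C")
      case True then show ?thesis using g3 Ce CB by auto
    next
      case nC: False
      show ?thesis
      proof (cases "e x = B")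
        case True then show ?thesis using g4[OF x nb nC True] c by auto
      next
        case False then show ?thesis using g5[OF x nb nC False] esub x by auto
      qed
    qed
  qed
  have sg1: "\<forall>x\<in>B. g x \<subseteq> B \<and> g x \<noteq> {}" using gval by blast
  have sg2: "\<forall>x. x \<notin> B \<longrightarrow> g x = {}" using g1 by blast
  have sg3: "\<forall>y\<in>B. \<exists>x\<in>B. y \<in> g x" using gb bB by blast
  have sg: "shop B g" unfolding shop_def using sg1 sg2 sg3 by (intro conjI)
  have "sub_shop g e"
    unfolding sub_shop_def using gval g1 by blast
  hence gM: "g \<in> M" using subM[OF eM sg] by blast
  have P1: "A_shop B g" unfolding A_shop_def using sg gb bB by blast
  have P2: "\<forall>x\<in>C. g x = {x}" using g3 by blast
  have P3: "\<forall>x\<in>B - {b} - C. \<exists>y\<in>C. g x = {y}"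
    proof
    fix x assume x: "x \<in> B - {b} - C"
    have "e x = B \<or> (\<exists>y. e x = {y})" using eshape x by blast
    then show "\<exists>y\<in>C. g x = {y}"
    proof
      assume ex: "e x = B"
      have "c \<in> C" unfolding C_def by simp
      moreover have "g x = {c}" using x ex g4 by blast
      ultimately show ?thesis by blast
    next
      assume "\<exists>y. e x = {y}"
      then obtain y where y: "e x = {y}" by blast
      then have "y \<in> C" using esing unfolding C_def B1_def by blast
      moreover have "e x \<noteq> B"
      proof
        assume "e x = B" then have "B = {y}" using y by simp
        then show False using Bnb bB by blast
      qed
      moreover have "g x = {y}" using x y g5 calculation(2) by auto
      ultimately show ?thesis by blast
    qed
  qed
  have P4: "{b} \<union> C \<union> (B - {b} - C) = B" using bB CB by blast
  have P5: "C \<inter> (B - {b} - C) = {}" by blast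
  show ?thesis
    apply (rule bexI[OF _ gM])
    apply (rule conjI[OF P1])
    apply (rule exI[of _ b], rule exI[of _ C], rule exI[of _ "B - {b} - C"])
    apply (intro conjI)
    using bB CB Cne gb P2 P3 P4 P5 by blast+
qed

lemma comp_shop2: assumes "shop B g" "shop B f" shows "shop B (shop_comp g f)"
proof -
  have a: "\<forall>x\<in>B. f x \<subseteq> B \<and> f x \<noteq> {}" "\<forall>x. x \<notin> B \<longrightarrow> f x = {}" "\<forall>y\<in>B. \<exists>x\<in>B. y \<in> f x"
    using assms(2) unfolding shop_def by blast+
  have b: "\<forall>x\<in>B. g x \<subseteq> B \<and> g x \<noteq> {}" "\<forall>x. x \<notin> B \<longrightarrow> g x = {}" "\<forall>y\<in>B. \<exists>x\<in>B. y \<in> g x"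
    using assms(1) unfolding shop_def by blast+
  show ?thesis unfolding shop_def shop_comp_def
  proof (intro conjI ballI allI impI)
    fix x assume x: "x \<in> B"
    show "{z. \<exists>y. y \<in> f x \<and> z \<in> g y} \<subseteq> B" using a b x by blast
    obtain y where "y \<in> f x" using a x by blast
    moreover then obtain z where "z \<in> g y" using a b x by blast
    ultimately show "{z. \<exists>y. y \<in> f x \<and> z \<in> g y} \<noteq> {}" by blast
  next
    fix x assume "x \<notin> B" then show "{z. \<exists>y. y \<in> f x \<and> z \<in> g y} = {}" using a by auto
  next
    fix y assume "y \<in> B"
    then obtain x1 where "x1 \<in> B" "y \<in> g x1" using b by blast
    moreover then obtain x where "x \<in> B" "x1 \<in> f x" using a by blast
    ultimately show "\<exists>x\<in>B. y \<in> {z. \<exists>y. y \<in> f x \<and> z \<in> g y}" by blast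
  qed
qed

lemma all_DSM: "DSM B {g. shop B g}"
proof -
  have "shop B (id_shop B)" unfolding shop_def id_shop_def by auto
  then show ?thesis unfolding DSM_def using comp_shop2 by blast
qed

lemma gen_is_DSM: assumes "shop B f" shows "DSM B (gen_DSM B f)" "f \<in> gen_DSM B f"
proof -
  let ?F = "{M. DSM B M \<and> f \<in> M}"
  have ne: "{g. shop B g} \<in> ?F" using all_DSM assms by blast
  have mem: "\<And>g. g \<in> gen_DSM B f \<longleftrightarrow> (\<forall>M\<in>?F. g \<in> M)" unfolding gen_DSM_def by blast
  show "f \<in> gen_DSM B f" using mem by blast
  have D1: "\<And>M. M \<in> ?F \<Longrightarrow> (\<forall>f\<in>M. shop B f)" unfolding DSM_def by blast
  have D2: "\<And>M. M \<in> ?F \<Longrightarrow> id_shop B \<in> M" unfolding DSM_def by blast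
  have D3: "\<And>M a c. M \<in> ?F \<Longrightarrow> a \<in> M \<Longrightarrow> c \<in> M \<Longrightarrow> shop_comp c a \<in> M"
    unfolding DSM_def by blast
  have D4: "\<And>M g k. M \<in> ?F \<Longrightarrow> g \<in> M \<Longrightarrow> shop B k \<Longrightarrow> sub_shop k g \<Longrightarrow> k \<in> M"
    unfolding DSM_def by blast
  show "DSM B (gen_DSM B f)"
    unfolding DSM_def
  proof (intro conjI ballI allI impI)
    fix g assume "g \<in> gen_DSM B f" then show "shop B g" using ne mem by blast
  next
    show "id_shop B \<in> gen_DSM B f" using mem D2 by blast
  next
    fix a c assume "a \<in> gen_DSM B f" "c \<in> gen_DSM B f"
    then show "shop_comp c a \<in> gen_DSM B f" using mem D3 by meson
  next
    fix g k assume "g \<in> gen_DSM B f" "shop B k \<and> sub_shop k g"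
    then show "k \<in> gen_DSM B f" using mem D4 by meson
  qed
qed

theorem lemma3p5:
  fixes B :: "'a set" and f :: "'a \<Rightarrow> 'a set"
  assumes "finite B" and "card B \<ge> 2" and "A_shop B f"
  shows "\<exists>g \<in> gen_DSM B f. A_shop B g \<and>
           (\<exists>b B' B''. b \<in> B \<and> B' \<subseteq> B \<and> B'' \<subseteq> B \<and> B' \<noteq> {} \<and>
              b \<notin> B' \<and> b \<notin> B'' \<and> B' \<inter> B'' = {} \<and> {b} \<union> B' \<union> B'' = B \<and>
              g b = B \<and>
              (\<forall>x\<in>B'. g x = {x}) \<and>
              (\<forall>x\<in>B''. \<exists>y\<in>B'. g x = {y}))"
proof -
  obtain b where b: "b \<in> B" "f b = B" "shop B f" using assms(3) unfolding A_shop_def by blast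
  show ?thesis using main[OF assms(1,2) b gen_is_DSM[OF b(3)]] .
qed

end
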